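(* Let $G$ be an infinite group and let $\mu$ be a (not necessarily symmetric) finitely supported generating probability measure on $G$. Then the Laplacian $\Delta_\mu:\mathbb{R}^G\to\mathbb{R}^G$ is surjective.
   Context: $\mu$ is generating if the semigroup generated by $\operatorname{supp}\mu$ is $G$. The Laplacian is defined by $\Delta_\mu f(x)=f(x)-\sum_{s\in\operatorname{supp}\mu}\mu(s)f(xs)$ for $f:G\to\mathbb{R}$. *)

theory Defs
  imports Complex_Main
begin

text \<open>Groups are modelled by the type class group_add (not necessarily
commutative); the group operation is written +.\<close>

definition supp_meas :: "('a \<Rightarrow> real) \<Rightarrow> 'a set" where
  "supp_meas \<mu> = {s. \<mu> s \<noteq> 0}"

definition finitely_supported_prob :: "('a \<Rightarrow> real) \<Rightarrow> bool" where
  "finitely_supported_prob \<mu> \<longleftrightarrow>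
     (\<forall>s. \<mu> s \<ge> 0) \<and> finite (supp_meas \<mu>) \<and> (\<Sum>s\<in>supp_meas \<mu>. \<mu> s) = 1"

inductive_set generated_semigroup :: "'a::plus set \<Rightarrow> 'a set" for S :: "'a set" where
  gen_base: "s \<in> S \<Longrightarrow> s \<in> generated_semigroup S"
| gen_step: "a \<in> generated_semigroup S \<Longrightarrow> b \<in> generated_semigroup S \<Longrightarrow> a + b \<in> generated_semigroup S"

definition generating :: "('a::plus \<Rightarrow> real) \<Rightarrow> bool" where
  "generating \<mu> \<longleftrightarrow> generated_semigroup (supp_meas \<mu>) = UNIV"

definition laplacian :: "('a::plus \<Rightarrow> real) \<Rightarrow> ('a \<Rightarrow> real) \<Rightarrow> 'a \<Rightarrow> real" where
  "laplacian \<mu> f x = f x - (\<Sum>s\<in>supp_meas \<mu>. \<mu> s * f (x + s))"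

end

theory Submission
  imports Defs "HOL-Library.Function_Algebras"
begin

lemma sum_fun_app: "(\<Sum>i\<in>A. F i) (y::'b) = (\<Sum>i\<in>A. F i y)"
  for F :: "'c \<Rightarrow> 'b \<Rightarrow> real"
  by (induction A rule: infinite_finite_induct) auto

lemma no_pos_harm:
  fixes \<mu> :: "'a::group_add \<Rightarrow> real" and h :: "'a \<Rightarrow> real"
  assumes inf: "infinite (UNIV :: 'a set)"
    and fsp: "finitely_supported_prob \<mu>"
    and gen: "generating \<mu>"
    and fin: "finite {y. h y \<noteq> 0}"
    and harm: "\<And>y. h y = (\<Sum>s\<in>supp_meas \<mu>. \<mu> s * h (y - s))"
    and pos: "h y1 > 0"
  shows False
proof -
  define S where "S = supp_meas \<mu>"
  define A where "A = {y. h y \<noteq> 0}"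
  have finS: "finite S" and sum1: "(\<Sum>s\<in>S. \<mu> s) = 1" and mupos: "\<And>s. s \<in> S \<Longrightarrow> \<mu> s > 0"
    using fsp unfolding finitely_supported_prob_def S_def supp_meas_def
    by (auto simp: order_le_less)
  have y1A: "y1 \<in> A" using pos A_def by auto
  define M where "M = Max (h ` A)"
  have finA: "finite A" using fin A_def by simp
  have "M \<in> h ` A" unfolding M_def using finA y1A by (intro Max_in) auto
  then obtain y0 where y0: "h y0 = M" by auto
  have hM1: "h y1 \<le> M" unfolding M_def using finA y1A by auto
  have Mpos: "M > 0" using hM1 pos by linarith
  have le: "h y \<le> M" for y
  proof (cases "y \<in> A")
    case True then show ?thesis unfolding M_def using finA by auto
  next
    case False then show ?thesis using Mpos A_def by auto
  qed
  have step: "h (y - s) = M" if "h y = M" "s \<in> S" for y s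
  proof (rule ccontr)
    assume "h (y - s) \<noteq> M"
    then have lt: "h (y - s) < M" using le[of "y - s"] by auto
    have "(\<Sum>t\<in>S. \<mu> t * h (y - t)) < (\<Sum>t\<in>S. \<mu> t * M)"
    proof (rule sum_strict_mono_ex1[OF finS])
      show "\<forall>x\<in>S. \<mu> x * h (y - x) \<le> \<mu> x * M"
        using mupos le by (simp add: mult_left_mono less_imp_le)
      show "\<exists>a\<in>S. \<mu> a * h (y - a) < \<mu> a * M"
        using that(2) lt mupos by auto
    qed
    also have "\<dots> = M" using sum1 by (simp add: sum_distrib_right[symmetric])
    finally show False using harm[of y] that(1) S_def by simp
  qed
  have gall: "a \<in> generated_semigroup S \<Longrightarrow> \<forall>y. h y = M \<longrightarrow> h (y - a) = M" for a
  proof (induction a rule: generated_semigroup.induct)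
    case (gen_base s) then show ?case using step by auto
  next
    case (gen_step a b)
    have eq: "y - (a + b) = (y - b) - a" for y
      unfolding diff_conv_add_uminus minus_add add.assoc ..
    show ?case using gen_step.IH by (simp add: eq)
  qed
  have "h z = M" for z
  proof -
    have "(- z + y0) \<in> generated_semigroup S" using gen unfolding generating_def S_def by auto
    then have "h (y0 - (- z + y0)) = M" using gall y0 by auto
    moreover have "y0 - (- z + y0) = z"
      unfolding diff_conv_add_uminus minus_add minus_minus by simp
    ultimately show ?thesis by simp
  qed
  then have "A = UNIV" using Mpos A_def by auto
  then show False using finA inf by simp
qed

definition dl :: "'a \<Rightarrow> 'a \<Rightarrow> real" where
  "dl z = (\<lambda>y. if y = z then 1 else 0)"

definition sc :: "real \<Rightarrow> ('a \<Rightarrow> real) \<Rightarrow> ('a \<Rightarrow> real)" where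
  "sc c f = (\<lambda>y. c * f y)"

definition EE :: "('a::group_add \<Rightarrow> real) \<Rightarrow> 'a \<Rightarrow> 'a \<Rightarrow> real" where
  "EE \<mu> x = dl x - (\<Sum>s\<in>supp_meas \<mu>. sc (\<mu> s) (dl (x + s)))"

lemma vs_sc: "vector_space (sc :: real \<Rightarrow> ('a \<Rightarrow> real) \<Rightarrow> _)"
  by unfold_locales (auto simp: sc_def fun_eq_iff algebra_simps)

lemma vs_mult: "vector_space ((*) :: real \<Rightarrow> real \<Rightarrow> real)"
  by unfold_locales (auto simp: algebra_simps)

lemma lin_comb_zero:
  fixes \<mu> :: "'a::group_add \<Rightarrow> real"
  assumes inf: "infinite (UNIV :: 'a set)"
    and fsp: "finitely_supported_prob \<mu>"
    and gen: "generating \<mu>"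
    and finT: "finite T"
    and z: "(\<Sum>x\<in>T. sc (l x) (EE \<mu> x)) = 0"
  shows "\<forall>x\<in>T. l x = 0"
proof -
  define S where "S = supp_meas \<mu>"
  define h where "h y = (if y \<in> T then l y else 0)" for y
  have finS: "finite S" using fsp unfolding finitely_supported_prob_def S_def by auto
  have harm: "h y = (\<Sum>s\<in>S. \<mu> s * h (y - s))" for y
  proof -
    have "0 = (\<Sum>x\<in>T. sc (l x) (EE \<mu> x)) y" using z by simp
    also have "\<dots> = (\<Sum>x\<in>T. l x * ((if y = x then 1 else 0) - (\<Sum>s\<in>S. \<mu> s * (if y = x + s then 1 else 0))))"
      unfolding sum_fun_app by (simp add: sc_def EE_def dl_def sum_fun_app S_def)
    also have "\<dots> = (\<Sum>x\<in>T. (if y = x then l x else 0)) - (\<Sum>x\<in>T. \<Sum>s\<in>S. \<mu> s * (if x = y - s then l x else 0))"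
    proof -
      have pt: "l x * ((if y = x then 1 else 0) - (\<Sum>s\<in>S. \<mu> s * (if y = x + s then 1 else 0)))
        = (if y = x then l x else 0) - (\<Sum>s\<in>S. \<mu> s * (if x = y - s then l x else 0))" for x
        by (auto simp: right_diff_distrib sum_distrib_left eq_diff_eq eq_commute[of y] intro!: sum.cong)
      show ?thesis by (simp only: pt sum_subtractf)
    qed
    also have "\<dots> = (\<Sum>x\<in>T. (if y = x then l x else 0)) - (\<Sum>s\<in>S. \<mu> s * (\<Sum>x\<in>T. (if x = y - s then l x else 0)))"
      by (subst sum.swap) (simp add: sum_distrib_left)
    also have "\<dots> = h y - (\<Sum>s\<in>S. \<mu> s * h (y - s))"
      using finT by (simp add: h_def sum.delta sum.delta')
    finally show ?thesis by simp
  qed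
  have finh: "finite {y. h y \<noteq> 0}"
    by (rule finite_subset[OF _ finT]) (auto simp: h_def split: if_splits)
  have "\<not> h y > 0" for y
    using no_pos_harm[OF inf fsp gen finh harm[unfolded S_def]] by blast
  moreover have "\<not> (- h) y > 0" for y
  proof
    assume "(- h) y > 0"
    moreover have "finite {y. (- h) y \<noteq> 0}" using finh by simp
    moreover have "(- h) y = (\<Sum>s\<in>supp_meas \<mu>. \<mu> s * (- h) (y - s))" for y
      using harm[of y] by (simp add: S_def sum_negf)
    ultimately show False using no_pos_harm[OF inf fsp gen] by blast
  qed
  ultimately have h0: "h y = 0" for y
  proof -
    assume a: "\<And>y. \<not> h y > 0" "\<And>y. \<not> (- h) y > 0"
    show "h y = 0" using a(1)[of y] a(2)[of y] by simp
  qed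
  show ?thesis
  proof
    fix x assume "x \<in> T" then show "l x = 0" using h0[of x] by (simp add: h_def)
  qed
qed

theorem proposition1p6:
  fixes \<mu> :: "'a::group_add \<Rightarrow> real"
  assumes "infinite (UNIV :: 'a set)"
    and "finitely_supported_prob \<mu>"
    and "generating \<mu>"
  shows "surj (laplacian \<mu>)"
proof -
  have P: "vector_space_pair (sc :: real \<Rightarrow> ('a \<Rightarrow> real) \<Rightarrow> _) ((*) :: real \<Rightarrow> real \<Rightarrow> real)"
    using vs_sc vs_mult unfolding vector_space_pair_def by blast
  have M: "module (sc :: real \<Rightarrow> ('a \<Rightarrow> real) \<Rightarrow> _)"
    using vs_sc by (simp add: module_iff_vector_space)
  let ?E = "EE \<mu>"
  have injE: "inj ?E"
  proof (rule injI, rule ccontr)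
    fix a b assume eq: "?E a = ?E b" and ne: "a \<noteq> b"
    define l where "l x = (if x = a then 1 else (-1::real))" for x
    have "(\<Sum>x\<in>{a,b}. sc (l x) (?E x)) = 0"
    proof -
      have "(\<Sum>x\<in>{a,b}. sc (l x) (?E x)) = sc 1 (?E a) + sc (-1) (?E b)"
        using ne by (simp add: l_def)
      also have "\<dots> = 0" unfolding eq by (rule ext) (simp add: sc_def)
      finally show ?thesis .
    qed
    then have "\<forall>x\<in>{a,b}. l x = 0" by (intro lin_comb_zero[OF assms]) simp_all
    then show False by (simp add: l_def)
  qed
  have indep: "\<not> module.dependent sc (range ?E)"
  proof
    assume "module.dependent sc (range ?E)"
    then obtain t u where t: "finite t" "t \<subseteq> range ?E" "(\<Sum>v\<in>t. sc (u v) v) = 0"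
      and v: "\<exists>v\<in>t. u v \<noteq> 0" unfolding module.dependent_explicit[OF M] by blast
    define T where "T = inv ?E ` t"
    have inv: "\<forall>v\<in>t. ?E (inv ?E v) = v" using t(2) by (auto intro: f_inv_into_f)
    have tT: "t = ?E ` T" unfolding T_def image_image using inv by simp
    have finT: "finite T" using t(1) T_def by simp
    have "(\<Sum>x\<in>T. sc ((u \<circ> ?E) x) (?E x)) = 0"
      using t(3) unfolding tT by (subst (asm) sum.reindex) (auto intro: inj_on_subset[OF injE])
    then have "\<forall>x\<in>T. (u \<circ> ?E) x = 0" by (intro lin_comb_zero[OF assms finT])
    then show False using v tT by auto
  qed
  show ?thesis unfolding surj_def
  proof
    fix g :: "'a \<Rightarrow> real"
    obtain \<phi> where lin: "Vector_Spaces.linear sc (*) \<phi>" and phi: "\<forall>v\<in>range ?E. \<phi> v = g (inv ?E v)"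
      using vector_space_pair.linear_independent_extend[OF P indep, of "\<lambda>v. g (inv ?E v)"] by blast
    define f where "f y = \<phi> (dl y)" for y
    have "laplacian \<mu> f x = g x" for x
    proof -
      have "\<phi> (?E x) = f x - (\<Sum>s\<in>supp_meas \<mu>. \<mu> s * f (x + s))"
        unfolding EE_def f_def
        by (simp add: vector_space_pair.linear_diff[OF P lin] vector_space_pair.linear_sum[OF P lin] vector_space_pair.linear_scale[OF P lin])
      moreover have "\<phi> (?E x) = g x" using phi injE by simp
      ultimately show ?thesis unfolding laplacian_def by simp
    qed
    then show "\<exists>f. g = laplacian \<mu> f" by (intro exI[of _ f]) auto
  qed
qed

end
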